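(* Let $\mathcal{H}$ be a complex separable Hilbert space and $A$ a bounded selfadjoint operator on $\mathcal{H}$. Put $\mathfrak{W}(\sigma_A):=\|A\|+\|I-A\|-1$ and $\mathcal{B}_0(A):=\|A\|-\|I-A\|$. Then $A$ is an effect (i.e. $\mathbb{O}\le A\le I$) if and only if $$\mathfrak{W}(\sigma_A)+\bigl|\mathcal{B}_0(A)\bigr|\le 1.$$
   Context: $\|\cdot\|$ is the operator norm, $I$ the identity, $\mathbb{O}$ the zero operator; $A\le B$ means $\langle\varphi,A\varphi\rangle\le\langle\varphi,B\varphi\rangle$ for all $\varphi$. *)

theory Defs
  imports "HOL-Analysis.Analysis" "HOL-Library.Complex_Order"
begin

text \<open>Complex inner product spaces (physics convention: linear in the second argument).
  A complex Hilbert space is a type of class complex_inner_space that is also complete_space.\<close>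
class complex_inner_space = real_normed_vector +
  fixes scaleC :: "complex \<Rightarrow> 'a \<Rightarrow> 'a"
    and cinner :: "'a \<Rightarrow> 'a \<Rightarrow> complex"
  assumes scaleC_add_right: "scaleC a (x + y) = scaleC a x + scaleC a y"
    and scaleC_add_left: "scaleC (a + b) x = scaleC a x + scaleC b x"
    and scaleC_scaleC: "scaleC a (scaleC b x) = scaleC (a * b) x"
    and scaleC_one: "scaleC 1 x = x"
    and scaleR_scaleC: "scaleR r x = scaleC (complex_of_real r) x"
    and cinner_commute: "cinner x y = cnj (cinner y x)"
    and cinner_add_right: "cinner x (y + z) = cinner x y + cinner x z"
    and cinner_scaleC_right: "cinner x (scaleC a y) = a * cinner x y"
    and cinner_self_nonneg: "0 \<le> Re (cinner x x)"
    and norm_eq_sqrt_cinner: "norm x = sqrt (Re (cinner x x))"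

definition bounded_clinear_op :: "('a::complex_inner_space \<Rightarrow> 'a) \<Rightarrow> bool" where
  "bounded_clinear_op A \<longleftrightarrow>
     (\<forall>x y. A (x + y) = A x + A y) \<and> (\<forall>c x. A (scaleC c x) = scaleC c (A x)) \<and>
     (\<exists>K. \<forall>x. norm (A x) \<le> norm x * K)"

definition selfadjoint :: "('a::complex_inner_space \<Rightarrow> 'a) \<Rightarrow> bool" where
  "selfadjoint A \<longleftrightarrow> (\<forall>x y. cinner (A x) y = cinner x (A y))"

definition op_le :: "('a::complex_inner_space \<Rightarrow> 'a) \<Rightarrow> ('a \<Rightarrow> 'a) \<Rightarrow> bool" where
  "op_le A B \<longleftrightarrow> (\<forall>\<phi>. cinner \<phi> (A \<phi>) \<le> cinner \<phi> (B \<phi>))"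

definition is_effect :: "('a::complex_inner_space \<Rightarrow> 'a) \<Rightarrow> bool" where
  "is_effect A \<longleftrightarrow> op_le (\<lambda>_. 0) A \<and> op_le A id"

definition W_sigma :: "('a::complex_inner_space \<Rightarrow> 'a) \<Rightarrow> real" where
  "W_sigma A = onorm A + onorm (\<lambda>x. x - A x) - 1"

definition B0 :: "('a::complex_inner_space \<Rightarrow> 'a) \<Rightarrow> real" where
  "B0 A = onorm A - onorm (\<lambda>x. x - A x)"

end

theory Submission
  imports Defs
begin

lemma quad_aux:
  fixes p q k :: real
  assumes k: "k \<ge> 0" and p: "p \<ge> 0" and q: "q \<ge> 0"
    and h: "\<And>t. 0 \<le> p - 2 * t * k + t^2 * k * q"
  shows "k \<le> p * q"
proof (cases "k = 0")
  case True thus ?thesis using p q by simp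
next
  case False
  hence kp: "k > 0" using k by simp
  show ?thesis
  proof (cases "q = 0")
    case True
    have "0 \<le> p - 2 * ((p+1)/(2*k)) * k" using h[of "(p+1)/(2*k)"] True by simp
    also have "\<dots> = -1" using kp by (simp add: field_simps)
    finally show ?thesis by simp
  next
    case False
    hence qp: "q > 0" using q by simp
    have "0 \<le> p - 2 * (1/q) * k + (1/q)^2 * k * q" using h by blast
    also have "\<dots> = p - k / q" using qp by (simp add: field_simps power2_eq_square)
    finally have "k / q \<le> p" by simp
    thus ?thesis using qp by (simp add: divide_le_eq mult.commute)
  qed
qed

lemma sesq_cs:
  fixes B :: "'a::complex_inner_space \<Rightarrow> 'a \<Rightarrow> complex"
  assumes add: "\<And>x y z. B x (y + z) = B x y + B x z"
   and sc: "\<And>x a y. B x (scaleC a y) = a * B x y"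
   and herm: "\<And>x y. B x y = cnj (B y x)"
   and pos: "\<And>x. 0 \<le> Re (B x x)"
  shows "(cmod (B x y))^2 \<le> Re (B x x) * Re (B y y)"
proof -
  have addL: "\<And>x y z. B (y+z) x = B y x + B z x"
  proof -
    fix x y z
    have "B (y+z) x = cnj (B x (y+z))" by (rule herm)
    also have "\<dots> = cnj (B x y) + cnj (B x z)" by (simp add: add)
    also have "\<dots> = B y x + B z x" by (simp add: herm[of y x] herm[of z x])
    finally show "B (y+z) x = B y x + B z x" .
  qed
  have scL: "\<And>x a y. B (scaleC a y) x = cnj a * B y x"
  proof -
    fix x a y
    have "B (scaleC a y) x = cnj (B x (scaleC a y))" by (rule herm)
    also have "\<dots> = cnj a * cnj (B x y)" by (simp add: sc)
    also have "\<dots> = cnj a * B y x" by (simp add: herm[of y x])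
    finally show "B (scaleC a y) x = cnj a * B y x" .
  qed
  have real: "\<And>x. B x x = of_real (Re (B x x))"
  proof -
    fix x
    have "Im (B x x) = Im (cnj (B x x))" by (subst herm, rule refl)
    hence "Im (B x x) = 0" by simp
    thus "B x x = of_real (Re (B x x))" by (simp add: complex_eq_iff)
  qed
  define c where "c = B x y"
  define p where "p = Re (B x x)"
  define q where "q = Re (B y y)"
  have byx: "B y x = cnj c" unfolding c_def by (rule herm)
  have cc: "c * cnj c = of_real ((cmod c)^2)" using complex_norm_square[of c] by simp
  have "0 \<le> p - 2 * t * (cmod c)^2 + t^2 * (cmod c)^2 * q" for t
  proof -
    define s where "s = - of_real t * cnj c"
    define w where "w = x + scaleC s y"
    have "B w w = B x x + s * c + cnj s * (cnj c + s * B y y)"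
      unfolding w_def by (simp add: add addL sc scL c_def byx[unfolded c_def] algebra_simps)
    also have "\<dots> = of_real p + of_real (- 2 * t * (cmod c)^2 + t^2 * (cmod c)^2 * q)"
      apply (subst real[of x], subst real[of y])
      unfolding s_def p_def[symmetric] q_def[symmetric]
      using cc by (simp add: power2_eq_square) algebra
    finally have "Re (B w w) = p - 2 * t * (cmod c)^2 + t^2 * (cmod c)^2 * q" by simp
    thus ?thesis using pos[of w] by simp
  qed
  hence "(cmod c)^2 \<le> p * q"
    by (intro quad_aux) (auto simp: p_def q_def pos)
  thus ?thesis unfolding c_def p_def q_def .
qed

lemma cinner_zero_right: "cinner x (0::'a::complex_inner_space) = 0"
  using cinner_add_right[of x 0 0] by simp

lemma cinner_diff_right: "cinner x (y - z) = cinner x y - cinner (x::'a::complex_inner_space) z"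
  using cinner_add_right[of x "y - z" z] by (simp add: algebra_simps)

lemma cinner_diff_left: "cinner (y - z) x = cinner y x - cinner (z::'a::complex_inner_space) x"
  by (metis cinner_commute cinner_diff_right complex_cnj_diff)

lemma scaleC_diff_right: "scaleC a (y - z) = scaleC a y - scaleC a (z::'a::complex_inner_space)"
  using scaleC_add_right[of a "y - z" z] by (simp add: algebra_simps)

lemma norm_sq_cinner: "(norm x)^2 = Re (cinner x (x::'a::complex_inner_space))"
  by (simp add: norm_eq_sqrt_cinner cinner_self_nonneg)

lemma cinner_self_real: "cinner x (x::'a::complex_inner_space) = of_real (Re (cinner x x))"
proof -
  have "Im (cinner x x) = Im (cnj (cinner x x))" by (subst cinner_commute, rule refl)
  hence "Im (cinner x x) = 0" by simp
  thus ?thesis by (simp add: complex_eq_iff)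
qed

lemma cinner_cs: "cmod (cinner x y) \<le> norm x * norm (y::'a::complex_inner_space)"
proof -
  have "(cmod (cinner x y))^2 \<le> Re (cinner x x) * Re (cinner y y)"
    by (rule sesq_cs) (auto simp: cinner_add_right cinner_scaleC_right cinner_self_nonneg
        intro: cinner_commute)
  also have "\<dots> = (norm x * norm y)^2" by (simp add: norm_sq_cinner power_mult_distrib)
  finally show ?thesis by (rule power2_le_imp_le) simp
qed

lemma contraction:
  fixes T :: "'a::complex_inner_space \<Rightarrow> 'a"
  assumes add: "\<And>x y. T (x + y) = T x + T y"
    and sc: "\<And>a x. T (scaleC a x) = scaleC a (T x)"
    and sa: "\<And>x y. cinner (T x) y = cinner x (T y)"
    and lo: "\<And>x. 0 \<le> Re (cinner x (T x))"
    and hi: "\<And>x. Re (cinner x (T x)) \<le> Re (cinner x x)"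
  shows "norm (T y) \<le> norm y"
proof -
  let ?B = "\<lambda>x y. cinner x (T y)"
  have cs: "(cmod (?B (T y) y))^2 \<le> Re (?B (T y) (T y)) * Re (?B y y)"
  proof (rule sesq_cs)
    show "\<And>x y z. ?B x (y + z) = ?B x y + ?B x z" by (simp add: add cinner_add_right)
    show "\<And>x a y. ?B x (scaleC a y) = a * ?B x y" by (simp add: sc cinner_scaleC_right)
    show "\<And>x y. ?B x y = cnj (?B y x)" by (metis sa cinner_commute)
    show "\<And>x. 0 \<le> Re (?B x x)" by (rule lo)
  qed
  define n where "n = norm (T y)"
  define m where "m = norm y"
  have "n^2 = Re (?B (T y) y)" unfolding n_def by (simp add: norm_sq_cinner sa)
  also have "\<dots> \<le> cmod (?B (T y) y)" by (rule complex_Re_le_cmod)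
  finally have "(n^2)^2 \<le> (cmod (?B (T y) y))^2"
    by (intro power_mono) auto
  also note cs
  also have "Re (?B (T y) (T y)) * Re (?B y y) \<le> n^2 * m^2"
    unfolding n_def m_def norm_sq_cinner by (intro mult_mono hi lo cinner_self_nonneg)
  finally have h: "n^2 * n^2 \<le> n^2 * m^2" by (simp add: power2_eq_square)
  have "n \<le> m"
  proof (cases "n = 0")
    case True thus ?thesis by (simp add: m_def)
  next
    case False
    hence "n^2 > 0" by simp
    hence "n^2 \<le> m^2" using h by (simp only: mult_le_cancel_left_pos)
    thus ?thesis by (rule power2_le_imp_le) (simp add: m_def)
  qed
  thus ?thesis by (simp add: n_def m_def)
qed

lemma onorm_le1_iff:
  assumes "bounded_linear T"
  shows "onorm T \<le> 1 \<longleftrightarrow> (\<forall>x. norm (T x) \<le> norm x)"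
proof
  assume "onorm T \<le> 1"
  thus "\<forall>x. norm (T x) \<le> norm x"
    using onorm[OF assms] by (metis mult_le_cancel_right1 norm_ge_zero order_trans mult.commute mult_right_mono mult_1)
next
  assume "\<forall>x. norm (T x) \<le> norm x"
  thus "onorm T \<le> 1" by (intro onorm_bound) auto
qed

theorem mainTheorem4:
  fixes A :: "'a::{complex_inner_space, complete_space} \<Rightarrow> 'a"
  assumes separable: "\<exists>D::'a set. countable D \<and> closure D = UNIV"
    and bounded: "bounded_clinear_op A"
    and sa: "selfadjoint A"
  shows "is_effect A \<longleftrightarrow> W_sigma A + \<bar>B0 A\<bar> \<le> 1"
proof -
  from bounded obtain K where addA: "\<And>x y. A (x + y) = A x + A y"
    and scA: "\<And>c x. A (scaleC c x) = scaleC c (A x)" and bK: "\<And>x. norm (A x) \<le> norm x * K"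
    unfolding bounded_clinear_op_def by blast
  have saA: "\<And>x y. cinner (A x) y = cinner x (A y)" using sa unfolding selfadjoint_def by blast
  have blA: "bounded_linear A"
    by (rule bounded_linear_intro[OF addA _ bK]) (simp add: scaleR_scaleC scA)
  have blI: "bounded_linear (\<lambda>x. x - A x)"
    by (intro bounded_linear_sub bounded_linear_ident blA)
  have imA: "\<And>x. cinner x (A x) = of_real (Re (cinner x (A x)))"
  proof -
    fix x
    have "Im (cinner x (A x)) = Im (cnj (cinner x (A x)))"
      by (subst cinner_commute, simp add: saA)
    hence "Im (cinner x (A x)) = 0" by simp
    thus "cinner x (A x) = of_real (Re (cinner x (A x)))" by (simp add: complex_eq_iff)
  qed
  have eff: "is_effect A \<longleftrightarrow> (\<forall>x. 0 \<le> Re (cinner x (A x)) \<and> Re (cinner x (A x)) \<le> Re (cinner x x))"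
    unfolding is_effect_def op_le_def less_eq_complex_def
    apply (simp add: cinner_zero_right)
    using imA cinner_self_real
    by (metis Im_complex_of_real)
  have "is_effect A \<longleftrightarrow> (\<forall>x. norm (A x) \<le> norm x) \<and> (\<forall>x. norm (x - A x) \<le> norm x)"
  proof
    assume e: "is_effect A"
    hence lo: "\<And>x. 0 \<le> Re (cinner x (A x))" and hi: "\<And>x. Re (cinner x (A x)) \<le> Re (cinner x x)"
      using eff by auto
    have "norm (A y) \<le> norm y" for y
      by (rule contraction[OF addA scA saA lo hi])
    moreover have "norm (y - A y) \<le> norm y" for y
    proof (rule contraction[where T="\<lambda>x. x - A x"])
      show "\<And>x y. x + y - A (x + y) = x - A x + (y - A y)" by (simp add: addA)
      show "\<And>a x. scaleC a x - A (scaleC a x) = scaleC a (x - A x)" by (simp add: scA scaleC_diff_right)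
      show "\<And>x y. cinner (x - A x) y = cinner x (y - A y)"
        by (simp add: cinner_diff_left cinner_diff_right saA)
      show "\<And>x. 0 \<le> Re (cinner x (x - A x))" using hi by (simp add: cinner_diff_right)
      show "\<And>x. Re (cinner x (x - A x)) \<le> Re (cinner x x)" using lo by (simp add: cinner_diff_right)
    qed
    ultimately show "(\<forall>x. norm (A x) \<le> norm x) \<and> (\<forall>x. norm (x - A x) \<le> norm x)" by blast
  next
    assume n: "(\<forall>x. norm (A x) \<le> norm x) \<and> (\<forall>x. norm (x - A x) \<le> norm x)"
    have "Re (cinner x (T x)) \<le> Re (cinner x x)" if "\<forall>x. norm (T x) \<le> norm x" for x T
    proof -
      have "Re (cinner x (T x)) \<le> cmod (cinner x (T x))" by (rule complex_Re_le_cmod)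
      also have "\<dots> \<le> norm x * norm (T x)" by (rule cinner_cs)
      also have "\<dots> \<le> norm x * norm x" using that by (simp add: mult_left_mono)
      also have "\<dots> = Re (cinner x x)" using norm_sq_cinner[of x] by (simp add: power2_eq_square)
      finally show ?thesis .
    qed
    from this[of A] this[of "\<lambda>x. x - A x"] n show "is_effect A"
      unfolding eff by (auto simp: cinner_diff_right)
  qed
  also have "\<dots> \<longleftrightarrow> onorm A \<le> 1 \<and> onorm (\<lambda>x. x - A x) \<le> 1"
    using onorm_le1_iff[OF blA] onorm_le1_iff[OF blI] by simp
  also have "\<dots> \<longleftrightarrow> W_sigma A + \<bar>B0 A\<bar> \<le> 1"
    unfolding W_sigma_def B0_def by (simp add: abs_if) arith
  finally show ?thesis .
qed

end
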